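(* For $n\ge 4$, the dom-stability of the cycle $C_n$ is $St_{dom}(C_n)=3$ if $n\equiv 0\pmod 4$, $St_{dom}(C_n)=2$ if $n\equiv 3\pmod 4$, and $St_{dom}(C_n)=1$ otherwise.
   Context: A dominated coloring of a graph is a proper coloring in which every color class is dominated by at least one vertex, i.e. for each color class $C$ there is a vertex adjacent to every vertex of $C$; $\chi_{dom}(G)$ is the minimum number of colors in a dominated coloring. The dom-stability $St_{dom}(G)$ is the minimum number of vertices of $G$ whose removal changes the dominated chromatic number of $G$. *)

theory Defs
  imports Main
begin

text \<open>A graph is given by a finite vertex set V and a symmetric irreflexive
adjacency relation E (only its restriction to V matters).  Removing a set S of
vertices yields the induced subgraph on V - S with the same relation E.\<close>

text \<open>Convention for isolated vertices: a vertex also dominates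
itself (closed neighbourhood), so a singleton class consisting of an isolated
vertex counts as dominated.  For graphs without isolated vertices this coincides
with the open-neighbourhood definition (properness forces a class containing w
to be the singleton {w}, which is dominated by any neighbour of w).\<close>

definition dominated_coloring :: "'a set \<Rightarrow> ('a \<Rightarrow> 'a \<Rightarrow> bool) \<Rightarrow> ('a \<Rightarrow> nat) \<Rightarrow> bool" where
  "dominated_coloring V E c \<longleftrightarrow>
     (\<forall>u\<in>V. \<forall>v\<in>V. E u v \<longrightarrow> c u \<noteq> c v) \<and>
     (\<forall>i \<in> c ` V. \<exists>w\<in>V. \<forall>u\<in>V. c u = i \<longrightarrow> (u = w \<or> E w u))"

definition chi_dom :: "'a set \<Rightarrow> ('a \<Rightarrow> 'a \<Rightarrow> bool) \<Rightarrow> nat" where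
  "chi_dom V E = (LEAST k. \<exists>c. dominated_coloring V E c \<and> card (c ` V) = k)"

definition St_dom :: "'a set \<Rightarrow> ('a \<Rightarrow> 'a \<Rightarrow> bool) \<Rightarrow> nat" where
  "St_dom V E = (LEAST k. \<exists>S. S \<subseteq> V \<and> card S = k \<and> chi_dom (V - S) E \<noteq> chi_dom V E)"

definition cycle_adj :: "nat \<Rightarrow> nat \<Rightarrow> nat \<Rightarrow> bool" where
  "cycle_adj n u v \<longleftrightarrow> u = (v + 1) mod n \<or> v = (u + 1) mod n"

end

theory Submission
  imports Defs
begin



lemma class_pair:
  assumes dc: "dominated_coloring V E c" and a: "a \<in> V" and b: "b \<in> V"
    and ab: "a \<noteq> b" and cab: "c a = c b"
  shows "\<exists>w\<in>V. E w a \<and> E w b \<and> (\<forall>z\<in>V. c z = c a \<longrightarrow> E w z)"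
proof -
  from dc have pr: "\<forall>u\<in>V. \<forall>v\<in>V. E u v \<longrightarrow> c u \<noteq> c v"
    and dm: "\<forall>i \<in> c ` V. \<exists>w\<in>V. \<forall>u\<in>V. c u = i \<longrightarrow> (u = w \<or> E w u)"
    unfolding dominated_coloring_def by auto
  from dm a obtain w where w: "w \<in> V" "\<forall>u\<in>V. c u = c a \<longrightarrow> (u = w \<or> E w u)" by blast
  have all: "E w z" if "z \<in> V" "c z = c a" for z
  proof (rule ccontr)
    assume n: "\<not> E w z"
    then have zw: "z = w" using w that by blast
    have "a \<noteq> w \<or> b \<noteq> w" using ab by blast
    then show False
    proof
      assume "a \<noteq> w" then have "E w a" using w a by blast
      then show False using pr w(1) a zw that by metis
    next
      assume "b \<noteq> w" then have "E w b" using w b cab by metis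
      then show False using pr w(1) b zw that cab by metis
    qed
  qed
  show ?thesis using all a b cab w(1) by metis
qed

lemma fiber_le2:
  assumes dc: "dominated_coloring V E c" and fin: "finite V"
    and deg: "\<forall>w\<in>V. card {v\<in>V. E w v} \<le> 2"
  shows "card {v\<in>V. c v = i} \<le> 2"
proof (cases "\<exists>a\<in>V. \<exists>b\<in>V. a \<noteq> b \<and> c a = i \<and> c b = i")
  case True
  then obtain a b where ab: "a\<in>V" "b\<in>V" "a \<noteq> b" "c a = i" "c b = i" by blast
  then obtain w where w: "w\<in>V" "\<forall>z\<in>V. c z = c a \<longrightarrow> E w z"
    using class_pair[OF dc ab(1,2,3)] by auto
  have "{v\<in>V. c v = i} \<subseteq> {v\<in>V. E w v}" using w ab by auto
  then have "card {v\<in>V. c v = i} \<le> card {v\<in>V. E w v}"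
    by (intro card_mono) (use fin in auto)
  then show ?thesis using deg w by fastforce
next
  case False
  then have "card {v\<in>V. c v = i} \<le> Suc 0"
    by (subst card_le_Suc0_iff_eq) (use fin in auto)
  then show ?thesis by simp
qed

lemma card_le_2img:
  assumes fin: "finite X" and fib: "\<And>i. card {v\<in>X. c v = i} \<le> 2"
  shows "card X \<le> 2 * card (c ` X)"
proof -
  have "X = (\<Union>i\<in>c ` X. {v\<in>X. c v = i})" by auto
  then have "card X \<le> (\<Sum>i\<in>c ` X. card {v\<in>X. c v = i})"
    by (metis card_UN_le fin finite_imageI)
  also have "\<dots> \<le> (\<Sum>i\<in>c ` X. 2)" by (intro sum_mono fib)
  finally show ?thesis by simp
qed

lemma lb_triv:
  assumes dc: "dominated_coloring V E c" and fin: "finite V"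
    and deg: "\<forall>w\<in>V. card {v\<in>V. E w v} \<le> 2" and X: "X \<subseteq> V"
  shows "card X \<le> 2 * card (c ` X)"
proof (rule card_le_2img)
  show "finite X" using fin X finite_subset by blast
  fix i
  have "{v\<in>X. c v = i} \<subseteq> {v\<in>V. c v = i}" using X by auto
  then have "card {v\<in>X. c v = i} \<le> card {v\<in>V. c v = i}"
    by (intro card_mono) (use fin in auto)
  then show "card {v\<in>X. c v = i} \<le> 2" using fiber_le2[OF dc fin deg] by (meson order_trans)
qed

lemma lb_par:
  assumes dc: "dominated_coloring V E c" and fin: "finite V"
    and deg: "\<forall>w\<in>V. card {v\<in>V. E w v} \<le> 2" and A: "A \<subseteq> V"
    and odd: "odd (card A)"
    and cl: "\<forall>w\<in>V. \<forall>a\<in>A. \<forall>b\<in>V - A. \<not> (E w a \<and> E w b)"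
  shows "card V + 1 \<le> 2 * card (c ` V)"
proof -
  have disj: "c ` A \<inter> c ` (V - A) = {}"
  proof (rule ccontr)
    assume "c ` A \<inter> c ` (V - A) \<noteq> {}"
    then obtain a b where "a \<in> A" "b \<in> V - A" "c a = c b" by auto
    moreover have "a \<noteq> b" using calculation by auto
    ultimately show False using class_pair[OF dc, of a b] cl A by blast
  qed
  have fA: "finite A" using fin A finite_subset by blast
  have "card (c ` V) = card (c ` A \<union> c ` (V - A))" using A
    by (metis Un_Diff_cancel2 image_Un sup.absorb_iff2 Un_commute)
  also have "\<dots> = card (c ` A) + card (c ` (V - A))"
    by (rule card_Un_disjoint) (use fin fA disj in auto)
  finally have e: "card (c ` V) = card (c ` A) + card (c ` (V - A))" .
  have 1: "card A \<le> 2 * card (c ` A)" using lb_triv[OF dc fin deg A] .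
  have 2: "card (V - A) \<le> 2 * card (c ` (V - A))" using lb_triv[OF dc fin deg] by blast
  have 3: "card A + 1 \<le> 2 * card (c ` A)" using 1 odd by presburger
  have "card V = card A + card (V - A)" using A fin fA
    by (metis card_Diff_subset card_mono le_add_diff_inverse)
  then show ?thesis using e 2 3 by linarith
qed

lemma chi_le:
  assumes "dominated_coloring V E c" "card (c ` V) \<le> k"
  shows "chi_dom V E \<le> k"
  unfolding chi_dom_def using assms by (metis (mono_tags, lifting) Least_le le_trans)

lemma chi_ge:
  assumes "dominated_coloring V E c0" "\<And>c. dominated_coloring V E c \<Longrightarrow> k \<le> card (c ` V)"
  shows "k \<le> chi_dom V E"
proof -
  have "\<exists>c. dominated_coloring V E c \<and> card (c ` V) = chi_dom V E"
    unfolding chi_dom_def by (rule LeastI_ex) (use assms(1) in blast)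
  then obtain c where c: "dominated_coloring V E c" "card (c ` V) = chi_dom V E" by blast
  have "k \<le> card (c ` V)" by (rule assms(2)[OF c(1)])
  then show ?thesis using c(2) by simp
qed



lemma cyc_nbr:
  assumes "v < n" "cycle_adj n w v"
  shows "v = (w+1) mod n \<or> v = (w+n-1) mod n"
proof -
  have "w = (v+1) mod n \<or> v = (w+1) mod n" using assms(2) unfolding cycle_adj_def by auto
  then show ?thesis
  proof
    assume w: "w = (v+1) mod n"
    show ?thesis
    proof (cases "v + 1 < n")
      case True then have "w = v + 1" using w by simp
      then show ?thesis using assms(1) by simp
    next
      case False then have "Suc v = n" using assms(1) by auto
      then have "v = n - 1" "w = 0" using w by auto
      then show ?thesis using assms(1) by simp
    qed
  qed simp
qed

lemma cyc_deg:
  assumes "V \<subseteq> {0..<n}"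
  shows "\<forall>w\<in>V. card {v\<in>V. cycle_adj n w v} \<le> 2"
proof
  fix w assume "w \<in> V"
  have "{v\<in>V. cycle_adj n w v} \<subseteq> {(w+1) mod n, (w+n-1) mod n}"
  proof
    fix v assume "v \<in> {v\<in>V. cycle_adj n w v}"
    then have "v < n" "cycle_adj n w v" using assms by auto
    then show "v \<in> {(w+1) mod n, (w+n-1) mod n}" using cyc_nbr by blast
  qed
  then have "card {v\<in>V. cycle_adj n w v} \<le> card {(w+1) mod n, (w+n-1) mod n}"
    by (intro card_mono) auto
  also have "\<dots> \<le> 2" by (simp add: card_insert_if)
  finally show "card {v\<in>V. cycle_adj n w v} \<le> 2" .
qed

lemma cyc_irr:
  assumes "n \<ge> 2" "u < n"
  shows "\<not> cycle_adj n u u"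
proof
  assume "cycle_adj n u u"
  then have u: "u = (u+1) mod n" unfolding cycle_adj_def by auto
  show False
  proof (cases "u + 1 < n")
    case True then show False using u by simp
  next
    case False then have su: "Suc u = n" using assms by auto
    then have "(u+1) mod n = 0" by simp
    then have "u = 0" using u by simp
    then show False using su assms by simp
  qed
qed

lemma id_dc:
  assumes "n \<ge> 2" "V \<subseteq> {0..<n}"
  shows "dominated_coloring V (cycle_adj n) id"
  unfolding dominated_coloring_def
proof (intro conjI ballI impI)
  fix u v assume "u \<in> V" "v \<in> V" "cycle_adj n u v"
  then show "id u \<noteq> id v" using cyc_irr[OF assms(1)] assms(2) by auto
next
  fix i assume "i \<in> id ` V"
  then show "\<exists>w\<in>V. \<forall>u\<in>V. id u = i \<longrightarrow> u = w \<or> cycle_adj n w u" by auto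
qed

lemma cyc_nowrap:
  assumes "w < n - 1" "a < n - 1"
  shows "cycle_adj n w a \<longleftrightarrow> (w = a+1 \<or> a = w+1)"
  using assms unfolding cycle_adj_def by auto

lemma cyc_par_even:
  assumes "even n" "w < n" "a < n" "cycle_adj n w a"
  shows "a mod 2 \<noteq> w mod 2"
proof -
  have key: "(x+1) mod n mod 2 \<noteq> x mod 2" if "x < n" for x
  proof (cases "x + 1 < n")
    case True then have e: "(x+1) mod n = x+1" by simp
    show ?thesis unfolding e by presburger
  next
    case False then have xn: "x + 1 = n" using that by auto
    then have "(x+1) mod n = 0" by simp
    moreover have "x mod 2 = 1" using xn assms(1) by presburger
    ultimately show ?thesis by simp
  qed
  have "w = (a+1) mod n \<or> a = (w+1) mod n" using assms(4) unfolding cycle_adj_def by auto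
  then show ?thesis using key[OF assms(2)] key[OF assms(3)] by auto
qed

lemma dom_col_intro:
  assumes V: "V \<subseteq> {0..<n}"
    and pr: "\<forall>u\<in>V. \<forall>v\<in>V. cycle_adj n u v \<longrightarrow> c u \<noteq> c v"
    and pa: "\<forall>u\<in>V. \<forall>v\<in>V. c u = c v \<and> u < v \<longrightarrow> v = u + 2 \<and> u + 1 \<in> V"
  shows "dominated_coloring V (cycle_adj n) c"
  unfolding dominated_coloring_def
proof (intro conjI pr ballI)
  fix i assume "i \<in> c ` V"
  then have ex: "\<exists>v. v \<in> V \<and> c v = i" by auto
  define a where "a = (LEAST v. v \<in> V \<and> c v = i)"
  have a: "a \<in> V" "c a = i" using LeastI_ex[OF ex] unfolding a_def by auto
  have amin: "a \<le> z" if "z \<in> V" "c z = i" for z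
    unfolding a_def using that by (simp add: Least_le)
  show "\<exists>w\<in>V. \<forall>u\<in>V. c u = i \<longrightarrow> u = w \<or> cycle_adj n w u"
  proof (cases "\<exists>b\<in>V. c b = i \<and> a < b")
    case True
    then obtain b where b: "b \<in> V" "c b = i" "a < b" by blast
    then have b2: "b = a + 2" and a1: "a + 1 \<in> V" using pa a by auto
    have bn: "a + 2 < n" using b b2 V by auto
    have "\<forall>u\<in>V. c u = i \<longrightarrow> cycle_adj n (a+1) u"
    proof (intro ballI impI)
      fix u assume u: "u \<in> V" "c u = i"
      then have "u = a \<or> a < u" using amin by force
      then show "cycle_adj n (a+1) u"
      proof
        assume "u = a" then show ?thesis using bn unfolding cycle_adj_def by simp
      next
        assume "a < u" then have "u = a + 2" using pa a u by auto
        then show ?thesis using bn unfolding cycle_adj_def by simp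
      qed
    qed
    then show ?thesis using a1 by blast
  next
    case False
    then have "\<forall>u\<in>V. c u = i \<longrightarrow> u = a" using amin by force
    then show ?thesis using a by blast
  qed
qed



lemma modcancel: "((a::nat) + t) mod n = (b + t) mod n \<longleftrightarrow> a mod n = b mod n"
proof
  assume "(a + t) mod n = (b + t) mod n"
  then obtain q1 q2 where "a + t + n * q1 = b + t + n * q2" unfolding nat_mod_eq_iff by blast
  then have "a + n * q1 = b + n * q2" by linarith
  then show "a mod n = b mod n" unfolding nat_mod_eq_iff by blast
next
  assume "a mod n = b mod n"
  then show "(a + t) mod n = (b + t) mod n" by (rule mod_add_cong) simp
qed

lemma dc_transfer:
  assumes bij: "bij_betw h V W" and ed: "\<forall>u\<in>V. \<forall>v\<in>V. E' (h u) (h v) = E u v"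
    and dc: "dominated_coloring V E c"
  shows "dominated_coloring W E' (c \<circ> inv_into V h) \<and> card ((c \<circ> inv_into V h) ` W) = card (c ` V)"
proof -
  let ?g = "inv_into V h"
  have gb: "bij_betw ?g W V" using bij by (rule bij_betw_inv_into)
  have gW: "?g ` W = V" using gb by (simp add: bij_betw_def)
  have hg: "h (?g u) = u" if "u \<in> W" for u using bij that
    by (meson bij_betw_inv_into_right)
  have gin: "?g u \<in> V" if "u \<in> W" for u using gb that bij_betwE by blast
  have gh: "?g (h v) = v" if "v \<in> V" for v using bij that
    by (meson bij_betw_inv_into_left)
  have hin: "h v \<in> W" if "v \<in> V" for v using bij that bij_betwE by blast
  from dc have pr: "\<forall>u\<in>V. \<forall>v\<in>V. E u v \<longrightarrow> c u \<noteq> c v"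
    and dm: "\<forall>i \<in> c ` V. \<exists>w\<in>V. \<forall>u\<in>V. c u = i \<longrightarrow> (u = w \<or> E w u)"
    unfolding dominated_coloring_def by auto
  have img: "(c \<circ> ?g) ` W = c ` V" using gW by (metis image_comp)
  have "dominated_coloring W E' (c \<circ> ?g)"
    unfolding dominated_coloring_def
  proof (intro conjI ballI impI)
    fix u v assume u: "u \<in> W" and v: "v \<in> W" and e: "E' u v"
    have "E (?g u) (?g v)" using ed gin[OF u] gin[OF v] e hg[OF u] hg[OF v] by metis
    then show "(c \<circ> ?g) u \<noteq> (c \<circ> ?g) v" using pr gin[OF u] gin[OF v] by simp
  next
    fix i assume "i \<in> (c \<circ> ?g) ` W"
    then have "i \<in> c ` V" using img by simp
    then obtain w where w: "w \<in> V" "\<forall>u\<in>V. c u = i \<longrightarrow> (u = w \<or> E w u)" using dm by blast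
    have "\<forall>u\<in>W. (c \<circ> ?g) u = i \<longrightarrow> (u = h w \<or> E' (h w) u)"
    proof (intro ballI impI)
      fix u assume u: "u \<in> W" "(c \<circ> ?g) u = i"
      then have "?g u = w \<or> E w (?g u)" using w gin by auto
      then show "u = h w \<or> E' (h w) u"
        using hg[OF u(1)] ed w(1) gin[OF u(1)] by metis
    qed
    then show "\<exists>w\<in>W. \<forall>u\<in>W. (c \<circ> ?g) u = i \<longrightarrow> u = w \<or> E' w u" using hin[OF w(1)] by blast
  qed
  then show ?thesis using img by simp
qed

lemma chi_iso:
  assumes bij: "bij_betw h V W" and ed: "\<forall>u\<in>V. \<forall>v\<in>V. E' (h u) (h v) = E u v"
  shows "chi_dom W E' = chi_dom V E"
proof -
  let ?g = "inv_into V h"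
  have gb: "bij_betw ?g W V" using bij by (rule bij_betw_inv_into)
  have hg: "h (?g u) = u" if "u \<in> W" for u using bij that
    by (meson bij_betw_inv_into_right)
  have gin: "?g u \<in> V" if "u \<in> W" for u using gb that bij_betwE by blast
  have ed2: "\<forall>u\<in>W. \<forall>v\<in>W. E (?g u) (?g v) = E' u v"
    using ed hg gin by metis
  have "(\<lambda>k. \<exists>c. dominated_coloring W E' c \<and> card (c ` W) = k) =
        (\<lambda>k. \<exists>c. dominated_coloring V E c \<and> card (c ` V) = k)"
  proof (intro ext iffI)
    fix k assume "\<exists>c. dominated_coloring W E' c \<and> card (c ` W) = k"
    then show "\<exists>c. dominated_coloring V E c \<and> card (c ` V) = k"
      using dc_transfer[OF gb ed2] by blast
  next
    fix k assume "\<exists>c. dominated_coloring V E c \<and> card (c ` V) = k"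
    then show "\<exists>c. dominated_coloring W E' c \<and> card (c ` W) = k"
      using dc_transfer[OF bij ed] by blast
  qed
  then show ?thesis unfolding chi_dom_def by simp
qed

definition rot :: "nat \<Rightarrow> nat \<Rightarrow> nat \<Rightarrow> nat" where
  "rot n t v = (v + t) mod n"

lemma rot_inj:
  assumes "n > 0" shows "inj_on (rot n t) {0..<n}"
  unfolding inj_on_def rot_def using modcancel by auto

lemma rot_bij:
  assumes "n > 0" shows "bij_betw (rot n t) {0..<n} {0..<n}"
proof -
  have "rot n t ` {0..<n} \<subseteq> {0..<n}" using assms unfolding rot_def by auto
  moreover have "card (rot n t ` {0..<n}) = card {0..<n}"
    using rot_inj[OF assms] by (simp add: card_image)
  ultimately have "rot n t ` {0..<n} = {0..<n}"
    by (metis card_subset_eq finite_atLeastLessThan)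
  then show ?thesis using rot_inj[OF assms] by (simp add: bij_betw_def)
qed

lemma rot_adj:
  assumes "n > 0" "u < n" "v < n"
  shows "cycle_adj n (rot n t u) (rot n t v) = cycle_adj n u v"
proof -
  have 1: "((u + t) mod n = ((v + t) mod n + 1) mod n) = (u = (v+1) mod n)"
  proof -
    have "((v + t) mod n + 1) mod n = ((v+1) + t) mod n" by (simp add: mod_Suc_eq)
    then have "((u + t) mod n = ((v + t) mod n + 1) mod n) = (u mod n = (v+1) mod n)"
      using modcancel by metis
    then show ?thesis using assms by simp
  qed
  have 2: "((v + t) mod n = ((u + t) mod n + 1) mod n) = (v = (u+1) mod n)"
  proof -
    have "((u + t) mod n + 1) mod n = ((u+1) + t) mod n" by (simp add: mod_Suc_eq)
    then have "((v + t) mod n = ((u + t) mod n + 1) mod n) = (v mod n = (u+1) mod n)"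
      using modcancel by metis
    then show ?thesis using assms by simp
  qed
  show ?thesis unfolding cycle_adj_def rot_def by (simp only: 1 2)
qed

lemma chi_rot:
  assumes "n > 0" "S \<subseteq> {0..<n}"
  shows "chi_dom ({0..<n} - S) (cycle_adj n) = chi_dom ({0..<n} - rot n t ` S) (cycle_adj n)"
proof -
  have b: "bij_betw (rot n t) ({0..<n} - S) (rot n t ` ({0..<n} - S))"
    using rot_inj[OF assms(1)] by (meson Diff_subset inj_on_imp_bij_betw inj_on_subset)
  have "rot n t ` ({0..<n} - S) = rot n t ` {0..<n} - rot n t ` S"
    using rot_inj[OF assms(1)] assms(2) by (intro inj_on_image_set_diff) auto
  also have "rot n t ` {0..<n} = {0..<n}" using rot_bij[OF assms(1)] by (simp add: bij_betw_def)
  finally have "bij_betw (rot n t) ({0..<n} - S) ({0..<n} - rot n t ` S)" using b by simp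
  moreover have "\<forall>u\<in>{0..<n} - S. \<forall>v\<in>{0..<n} - S.
      cycle_adj n (rot n t u) (rot n t v) = cycle_adj n u v" using rot_adj[OF assms(1)] by auto
  ultimately have "chi_dom ({0..<n} - rot n t ` S) (cycle_adj n) = chi_dom ({0..<n} - S) (cycle_adj n)"
    by (rule chi_iso)
  then show ?thesis by simp
qed



definition stdc :: "nat \<Rightarrow> nat" where "stdc v = 2 * (v div 4) + v mod 2"

lemma std_md: "stdc u mod 2 = u mod 2" "stdc u div 2 = u div 4"
  unfolding stdc_def by auto

lemma std_pair:
  assumes "stdc u = stdc v" "u < v"
  shows "v = u + 2 \<and> u mod 4 < 2"
proof -
  have "u mod 2 = v mod 2" "u div 4 = v div 4" using std_md assms(1) by metis+
  define a s s' where "a = u div 4" "s = u mod 4" "s' = v mod 4"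
  have u: "u = 4 * a + s" "s < 4" unfolding a_s_s'_def by auto
  have v: "v = 4 * a + s'" "s' < 4" unfolding a_s_s'_def using \<open>u div 4 = v div 4\<close> by auto
  have "u mod 2 = s mod 2" "v mod 2 = s' mod 2" unfolding a_s_s'_def by (simp_all add: mod_mod_cancel)
  then have p: "s mod 2 = s' mod 2" using \<open>u mod 2 = v mod 2\<close> by simp
  have "s = 0 \<or> s = 1 \<or> s = 2 \<or> s = 3" "s' = 0 \<or> s' = 1 \<or> s' = 2 \<or> s' = 3" using u v by auto
  moreover have "s < s'" using assms(2) u v by simp
  ultimately have "s' = s + 2 \<and> s < 2" using p by auto
  then show ?thesis using u v unfolding a_s_s'_def by simp
qed

lemma std_adj: "stdc (v+1) \<noteq> stdc v"
proof
  assume h: "stdc (v+1) = stdc v"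
  have "(v+1) mod 2 \<noteq> v mod 2" by (simp add: mod_Suc)
  then show False using h std_md(1)[of v] std_md(1)[of "v+1"] by metis
qed

lemma std_wrap: "n \<ge> 4 \<Longrightarrow> stdc (n-1) \<noteq> stdc 0"
proof -
  assume "n \<ge> 4"
  then have "n - 1 \<ge> 3" by simp
  then have "(n-1) div 4 \<ge> 1 \<or> n - 1 = 3" by auto
  then show ?thesis unfolding stdc_def by auto
qed

lemma std_bound: "v < m \<Longrightarrow> stdc v < 2 * (m div 4) + min (m mod 4) 2"
proof -
  assume vm: "v < m"
  define a s b r where "a = v div 4" "s = v mod 4" "b = m div 4" "r = m mod 4"
  have v: "v = 4 * a + s" "s < 4" unfolding a_s_b_r_def by auto
  have m: "m = 4 * b + r" "r < 4" unfolding a_s_b_r_def by auto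
  have "v mod 2 = s mod 2" unfolding a_s_b_r_def by (simp add: mod_mod_cancel)
  moreover have "s = 0 \<or> s = 1 \<or> s = 2 \<or> s = 3" using v(2) by auto
  ultimately have s2: "v mod 2 = (if s = 1 \<or> s = 3 then 1 else 0)" by auto
  have "2 * a + (if s = 1 \<or> s = 3 then 1 else 0) < 2 * b + min r 2"
    using vm v m unfolding min_def by (auto split: if_splits; presburger)
  then show ?thesis unfolding stdc_def s2 a_s_b_r_def by simp
qed
lemma cyc_cases:
  assumes "u < n" "v < n" "cycle_adj n u v"
  shows "u = v+1 \<or> v = u+1 \<or> (u = 0 \<and> v = n-1) \<or> (v = 0 \<and> u = n-1)"
proof -
  have "u = (v+1) mod n \<or> v = (u+1) mod n" using assms(3) unfolding cycle_adj_def by auto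
  then show ?thesis
  proof
    assume u: "u = (v+1) mod n"
    show ?thesis
    proof (cases "v + 1 < n")
      case True then show ?thesis using u by simp
    next
      case False then have "v + 1 = n" using assms by auto
      then show ?thesis using u by auto
    qed
  next
    assume v: "v = (u+1) mod n"
    show ?thesis
    proof (cases "u + 1 < n")
      case True then show ?thesis using v by simp
    next
      case False then have "u + 1 = n" using assms by auto
      then show ?thesis using v by auto
    qed
  qed
qed

lemma std_dc:
  assumes n: "n \<ge> 4" and V: "V \<subseteq> {0..<n}"
    and cond: "\<forall>v. v \<in> V \<longrightarrow> v + 2 \<in> V \<longrightarrow> v mod 4 < 2 \<longrightarrow> v + 1 \<in> V"
  shows "dominated_coloring V (cycle_adj n) stdc"
proof (rule dom_col_intro[OF V])
  show "\<forall>u\<in>V. \<forall>v\<in>V. cycle_adj n u v \<longrightarrow> stdc u \<noteq> stdc v"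
  proof (intro ballI impI)
    fix u v assume u: "u \<in> V" and v: "v \<in> V" and e: "cycle_adj n u v"
    have "u < n" "v < n" using u v V by auto
    then have "u = v+1 \<or> v = u+1 \<or> (u = 0 \<and> v = n-1) \<or> (v = 0 \<and> u = n-1)"
      using cyc_cases e by blast
    then show "stdc u \<noteq> stdc v" using std_adj std_wrap[OF n] by metis
  qed
  show "\<forall>u\<in>V. \<forall>v\<in>V. stdc u = stdc v \<and> u < v \<longrightarrow> v = u + 2 \<and> u + 1 \<in> V"
    using std_pair cond by metis
qed

lemma std_img:
  assumes "V \<subseteq> {0..<m}"
  shows "card (stdc ` V) \<le> 2 * (m div 4) + min (m mod 4) 2"
proof -
  have "stdc ` V \<subseteq> {0..<2 * (m div 4) + min (m mod 4) 2}"
    using assms std_bound by auto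
  then show ?thesis by (metis card_atLeastLessThan card_mono diff_zero finite_atLeastLessThan)
qed

lemma chi_lb:
  assumes "n \<ge> 2" "V \<subseteq> {0..<n}"
  shows "card V \<le> 2 * chi_dom V (cycle_adj n)"
proof -
  have fin: "finite V" using assms(2) finite_subset by blast
  have "(card V + 1) div 2 \<le> chi_dom V (cycle_adj n)"
  proof (rule chi_ge[OF id_dc[OF assms]])
    fix c assume "dominated_coloring V (cycle_adj n) c"
    then have "card V \<le> 2 * card (c ` V)"
      using lb_triv[OF _ fin cyc_deg[OF assms(2)]] by blast
    then show "(card V + 1) div 2 \<le> card (c ` V)" by linarith
  qed
  then show ?thesis by linarith
qed

lemma chi_lb_par:
  assumes "n \<ge> 2" "V \<subseteq> {0..<n}" "A \<subseteq> V" "odd (card A)"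
    and cl: "\<forall>w\<in>V. \<forall>a\<in>A. \<forall>b\<in>V - A. \<not> (cycle_adj n w a \<and> cycle_adj n w b)"
  shows "card V + 1 \<le> 2 * chi_dom V (cycle_adj n)"
proof -
  have fin: "finite V" using assms(2) finite_subset by blast
  have "(card V + 2) div 2 \<le> chi_dom V (cycle_adj n)"
  proof (rule chi_ge[OF id_dc[OF assms(1,2)]])
    fix c assume "dominated_coloring V (cycle_adj n) c"
    then have "card V + 1 \<le> 2 * card (c ` V)"
      using lb_par[OF _ fin cyc_deg[OF assms(2)] assms(3,4) cl] by blast
    then show "(card V + 2) div 2 \<le> card (c ` V)" by linarith
  qed
  then show ?thesis by linarith
qed

lemma chi_ub:
  assumes "dominated_coloring V E c" "card (c ` V) \<le> k"
  shows "chi_dom V E \<le> k"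
  using chi_le assms by blast

lemma collect_less_Suc:
  "{v. v < Suc m \<and> P v} = (if P m then insert m {v. v < m \<and> P v} else {v. v < m \<and> P v})"
  by (auto simp: less_Suc_eq)

lemma card_even_below: "card {v. v < m \<and> v mod 2 = 0} = (m + 1) div 2"
proof (induction m)
  case 0 then show ?case by simp
next
  case (Suc m)
  show ?case
  proof (cases "m mod 2 = 0")
    case True
    then have "{v. v < Suc m \<and> v mod 2 = 0} = insert m {v. v < m \<and> v mod 2 = 0}"
      using collect_less_Suc[of m "\<lambda>v. v mod 2 = 0"] by simp
    then have "card {v. v < Suc m \<and> v mod 2 = 0} = Suc ((m + 1) div 2)" using Suc.IH by simp
    moreover have "Suc ((m + 1) div 2) = (Suc m + 1) div 2" using True by presburger
    ultimately show ?thesis by simp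
  next
    case False
    then have "{v. v < Suc m \<and> v mod 2 = 0} = {v. v < m \<and> v mod 2 = 0}"
      using collect_less_Suc[of m "\<lambda>v. v mod 2 = 0"] by simp
    then have "card {v. v < Suc m \<and> v mod 2 = 0} = (m + 1) div 2" using Suc.IH by simp
    moreover have "(m + 1) div 2 = (Suc m + 1) div 2" using False by presburger
    ultimately show ?thesis by simp
  qed
qed

lemma card_odd_below: "card {v. v < m \<and> v mod 2 = 1} = m div 2"
proof (induction m)
  case 0 then show ?case by simp
next
  case (Suc m)
  show ?case
  proof (cases "m mod 2 = 1")
    case True
    then have "{v. v < Suc m \<and> v mod 2 = 1} = insert m {v. v < m \<and> v mod 2 = 1}"
      using collect_less_Suc[of m "\<lambda>v. v mod 2 = 1"] by simp
    then have "card {v. v < Suc m \<and> v mod 2 = 1} = Suc (m div 2)" using Suc.IH by simp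
    moreover have "Suc (m div 2) = Suc m div 2" using True by presburger
    ultimately show ?thesis by simp
  next
    case False
    then have "{v. v < Suc m \<and> v mod 2 = 1} = {v. v < m \<and> v mod 2 = 1}"
      using collect_less_Suc[of m "\<lambda>v. v mod 2 = 1"] by simp
    then have "card {v. v < Suc m \<and> v mod 2 = 1} = m div 2" using Suc.IH by simp
    moreover have "m div 2 = Suc m div 2" using False by presburger
    ultimately show ?thesis by simp
  qed
qed

lemma mod2_cases: "(x::nat) mod 2 = 0 \<or> x mod 2 = 1" by auto

lemma pair_same_par:
  assumes V: "V \<subseteq> {0..<n}" and h: "even n \<or> V \<subseteq> {0..<n-1}"
    and w: "w \<in> V" and a: "a \<in> V" and b: "b \<in> V"
    and e: "cycle_adj n w a" "cycle_adj n w b"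
  shows "a mod 2 = b mod 2"
  using h
proof
  assume "even n"
  have "w < n" "a < n" "b < n" using V w a b by auto
  then have "a mod 2 \<noteq> w mod 2" "b mod 2 \<noteq> w mod 2"
    using cyc_par_even e \<open>even n\<close> by blast+
  then show ?thesis using mod2_cases[of a] mod2_cases[of b] mod2_cases[of w] by auto
next
  assume V1: "V \<subseteq> {0..<n-1}"
  have lt: "w < n - 1" "a < n - 1" "b < n - 1" using V1 w a b by auto
  have "w = a + 1 \<or> a = w + 1" "w = b + 1 \<or> b = w + 1"
    using cyc_nowrap[OF lt(1) lt(2)] cyc_nowrap[OF lt(1) lt(3)] e by auto
  then have "a = b \<or> b = a + 2 \<or> a = b + 2" by auto
  then show ?thesis by auto
qed

lemma cl_par:
  assumes V: "V \<subseteq> {0..<n}" and h: "even n \<or> V \<subseteq> {0..<n-1}"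
  shows "\<forall>w\<in>V. \<forall>a\<in>{v\<in>V. v mod 2 = p}. \<forall>b\<in>V - {v\<in>V. v mod 2 = p}.
           \<not> (cycle_adj n w a \<and> cycle_adj n w b)"
proof (intro ballI notI)
  fix w a b assume w: "w \<in> V" and a: "a \<in> {v\<in>V. v mod 2 = p}"
    and b: "b \<in> V - {v\<in>V. v mod 2 = p}" and e: "cycle_adj n w a \<and> cycle_adj n w b"
  have "a mod 2 = b mod 2" using pair_same_par[OF V h w] a b e by blast
  then show False using a b by auto
qed

lemma cl_below:
  assumes V: "V \<subseteq> {0..<n-1}" and x: "x \<notin> V"
  shows "\<forall>w\<in>V. \<forall>a\<in>{v\<in>V. v < x \<and> v mod 2 = p}. \<forall>b\<in>V - {v\<in>V. v < x \<and> v mod 2 = p}.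
           \<not> (cycle_adj n w a \<and> cycle_adj n w b)"
proof (intro ballI notI)
  fix w a b
  assume w: "w \<in> V" and a: "a \<in> {v\<in>V. v < x \<and> v mod 2 = p}"
    and b: "b \<in> V - {v\<in>V. v < x \<and> v mod 2 = p}" and e: "cycle_adj n w a \<and> cycle_adj n w b"
  have lt: "w < n - 1" "a < n - 1" "b < n - 1" using V w a b by auto
  have wa: "w = a + 1 \<or> a = w + 1" and wb: "w = b + 1 \<or> b = w + 1"
    using cyc_nowrap[OF lt(1) lt(2)] cyc_nowrap[OF lt(1) lt(3)] e by auto
  have wx: "w \<noteq> x" using w x by auto
  have bx: "b \<noteq> x" using b x by auto
  have ab: "a \<noteq> b" using a b by auto
  have ax: "a < x" and ap: "a mod 2 = p" using a by auto
  have "b = a + 2 \<or> a = b + 2" using wa wb ab by auto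
  then show False
  proof
    assume ba: "b = a + 2"
    then have "b mod 2 = p" using ap by simp
    then have "x \<le> b" using b by auto
    moreover have "w = a + 1" using wa wb ba by auto
    ultimately show False using ax wx bx ba by auto
  next
    assume ab2: "a = b + 2"
    then have "b mod 2 = p" using ap by simp
    then show False using ax b ab2 by auto
  qed
qed



lemma m40: "(n::nat) mod 4 = 0 \<Longrightarrow> n = 4 * (n div 4)"
  by (metis add.right_neutral div_mult_mod_eq mult.commute)

lemma std_ge: "4 * k \<le> w \<Longrightarrow> 2 * k \<le> stdc w"
proof -
  assume "4 * k \<le> w"
  then have "(4 * k) div 4 \<le> w div 4" by (rule div_le_mono)
  then show ?thesis unfolding stdc_def by simp
qed

definition spc :: "nat \<Rightarrow> nat \<Rightarrow> nat" where
  "spc x v = (if v < x then stdc v else stdc (v+2) - 1)"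

lemma spc_adj:
  assumes "v \<noteq> x" "v + 1 \<noteq> x" "x \<ge> 1"
  shows "spc x (v+1) \<noteq> spc x v"
proof (cases "v < x")
  case True
  then have "v + 1 < x" using assms by auto
  then show ?thesis unfolding spc_def using True std_adj by auto
next
  case False
  then have "v \<ge> 2" using assms by auto
  then have "2 \<le> stdc (v+2)" "2 \<le> stdc (v+1+2)" using std_ge[of 1] by auto
  moreover have "stdc (v+1+2) \<noteq> stdc (v+2)" using std_adj[of "v+2"] by simp
  ultimately show ?thesis unfolding spc_def using False by auto
qed

lemma sp_dc:
  assumes n: "n mod 4 = 0" "n \<ge> 4" and x: "x mod 4 = 1" "x < n - 1"
  shows "dominated_coloring ({0..<n-1} - {x}) (cycle_adj n) (spc x)"
proof (rule dom_col_intro)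
  let ?V = "{0..<n-1} - {x}"
  show "?V \<subseteq> {0..<n}" by auto
  have x1: "x \<ge> 1" using x by presburger
  show "\<forall>u\<in>?V. \<forall>v\<in>?V. cycle_adj n u v \<longrightarrow> spc x u \<noteq> spc x v"
  proof (intro ballI impI)
    fix u v assume u: "u \<in> ?V" and v: "v \<in> ?V" and e: "cycle_adj n u v"
    have lt: "u < n - 1" "v < n - 1" using u v by auto
    then have "u = v + 1 \<or> v = u + 1" using cyc_nowrap e by blast
    then show "spc x u \<noteq> spc x v"
    proof
      assume "u = v + 1" then show ?thesis using spc_adj[OF _ _ x1, of v] u v by auto
    next
      assume "v = u + 1" then show ?thesis using spc_adj[OF _ _ x1, of u] u v by auto
    qed
  qed
  show "\<forall>u\<in>?V. \<forall>v\<in>?V. spc x u = spc x v \<and> u < v \<longrightarrow> v = u + 2 \<and> u + 1 \<in> ?V"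
  proof (intro ballI impI)
    fix u v assume u: "u \<in> ?V" and v: "v \<in> ?V" and h: "spc x u = spc x v \<and> u < v"
    have ux: "u \<noteq> x" "v \<noteq> x" "u < n - 1" "v < n - 1" using u v by auto
    have uv: "u < v" using h by simp
    show "v = u + 2 \<and> u + 1 \<in> ?V"
    proof (cases "v < x")
      case True
      then have "stdc u = stdc v" using h uv unfolding spc_def by auto
      then have "v = u + 2" using std_pair uv by blast
      then show ?thesis using True ux by auto
    next
      case False
      then have vx: "x < v" using ux by auto
      show ?thesis
      proof (cases "u < x")
        case True
        have "stdc u < 2 * (x div 4) + min (x mod 4) 2" using std_bound True by blast
        then have a: "stdc u \<le> 2 * (x div 4)" using x by simp
        have "4 * (x div 4 + 1) \<le> v + 2" using vx x by presburger
        then have "2 * (x div 4 + 1) \<le> stdc (v + 2)" by (rule std_ge)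
        then have "spc x u < spc x v" using a True vx unfolding spc_def by auto
        then show ?thesis using h by simp
      next
        case False
        then have ux2: "x < u" using ux by auto
        have "2 \<le> stdc (u+2)" "2 \<le> stdc (v+2)" using std_ge[of 1] ux2 vx x1 by auto
        then have "stdc (u+2) = stdc (v+2)" using h ux2 vx unfolding spc_def by auto
        then have "v + 2 = u + 2 + 2" using std_pair uv by (metis add_less_cancel_right)
        then show ?thesis using ux2 ux by auto
      qed
    qed
  qed
qed

lemma sp_img:
  assumes n: "n mod 4 = 0" "n \<ge> 4" and x: "x mod 4 = 1" "x < n - 1"
  shows "card (spc x ` ({0..<n-1} - {x})) \<le> n div 2"
proof -
  have "spc x ` ({0..<n-1} - {x}) \<subseteq> {0..<n div 2}"
  proof
    fix c assume "c \<in> spc x ` ({0..<n-1} - {x})"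
    then obtain v where v0: "v \<in> {0..<n-1} - {x}" "c = spc x v" by blast
    then have v: "v < n - 1" "v \<noteq> x" "c = spc x v" by auto
    show "c \<in> {0..<n div 2}"
    proof (cases "v < x")
      case True
      have "stdc v < 2 * (x div 4) + min (x mod 4) 2" using std_bound True by blast
      moreover have "2 * (x div 4) + min (x mod 4) 2 \<le> n div 2"
      proof -
        obtain q where q: "n = 4 * q" using n(1) m40 by blast
        have xr: "x = x div 4 * 4 + 1" using x(1) by (metis div_mult_mod_eq)
        have "x div 4 < q" using xr q x(2) by linarith
        then show ?thesis using x(1) q by simp
      qed
      ultimately show ?thesis using v True unfolding spc_def by auto
    next
      case False
      have "v + 2 < n + 1" using v by auto
      then have "stdc (v+2) < 2 * ((n+1) div 4) + min ((n+1) mod 4) 2" by (rule std_bound)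
      moreover have "2 * ((n+1) div 4) + min ((n+1) mod 4) 2 = n div 2 + 1"
      proof -
        obtain q where q: "n = 4 * q" using n(1) m40 by blast
        have "(4 * q + 1) div 4 = q" "(4 * q + 1) mod 4 = 1" by simp_all
        then show ?thesis using q by simp
      qed
      ultimately show ?thesis using v False unfolding spc_def by auto
    qed
  qed
  then show ?thesis by (metis card_atLeastLessThan card_mono diff_zero finite_atLeastLessThan)
qed



lemma div4: "(4 * (k::nat) + r) div 4 = k + r div 4" "(4 * k + r) mod 4 = r mod 4"
  by simp_all

lemma chi_std_upto:
  assumes "n \<ge> 4" "m \<le> n"
  shows "chi_dom {0..<m} (cycle_adj n) \<le> 2 * (m div 4) + min (m mod 4) 2"
proof (rule chi_ub)
  show "dominated_coloring {0..<m} (cycle_adj n) stdc"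
    by (rule std_dc) (use assms in auto)
  show "card (stdc ` {0..<m}) \<le> 2 * (m div 4) + min (m mod 4) 2" by (rule std_img) auto
qed

lemma chi_lb_int:
  assumes "n \<ge> 2" "m \<le> n"
  shows "m \<le> 2 * chi_dom {0..<m} (cycle_adj n)"
  using chi_lb[of n "{0..<m}"] assms by auto

lemma nc1:
  assumes "n > 0" "x < n"
  shows "chi_dom ({0..<n} - {x}) (cycle_adj n) = chi_dom {0..<n-1} (cycle_adj n)"
proof -
  have "rot n (n-1-x) ` {x} = {n-1}" unfolding rot_def using assms by auto
  moreover have "{0..<n} - {n-1} = {0..<n-1}" using assms by auto
  ultimately show ?thesis using chi_rot[of n "{x}" "n-1-x"] assms by auto
qed

lemma nc2:
  assumes "n > 0" "a < n" "b < n" "a \<noteq> b"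
  shows "\<exists>y<n-1. chi_dom ({0..<n} - {a,b}) (cycle_adj n) = chi_dom ({0..<n-1} - {y}) (cycle_adj n)"
proof -
  define y where "y = (a + (n-1-b)) mod n"
  have yn: "y < n" unfolding y_def using assms by auto
  have "y \<noteq> n - 1"
  proof
    assume "y = n - 1"
    then have "(a + (n-1-b)) mod n = (b + (n-1-b)) mod n" unfolding y_def using assms by auto
    then have "a mod n = b mod n" using modcancel by blast
    then show False using assms by simp
  qed
  then have y1: "y < n - 1" using yn by auto
  have "rot n (n-1-b) ` {a,b} = {y, n-1}" unfolding rot_def y_def using assms by auto
  moreover have "{0..<n} - {y, n-1} = {0..<n-1} - {y}" using assms y1 by auto
  ultimately have "chi_dom ({0..<n} - {a,b}) (cycle_adj n) = chi_dom ({0..<n-1} - {y}) (cycle_adj n)"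
    using chi_rot[of n "{a,b}" "n-1-b"] assms by auto
  then show ?thesis using y1 by blast
qed

lemma refl2:
  assumes "n > 0" "x < n - 1"
  shows "chi_dom ({0..<n-1} - {x}) (cycle_adj n) = chi_dom ({0..<n-1} - {n-2-x}) (cycle_adj n)"
proof -
  have e1: "{0..<n-1} - {x} = {0..<n} - {x, n-1}" using assms by auto
  have r1: "rot n (n-1-x) x = n - 1" unfolding rot_def using assms by auto
  have eq: "n - 1 + (n - 1 - x) = (n - 2 - x) + n" using assms by auto
  have lt: "n - 2 - x < n" using assms by auto
  have "((n - 2 - x) + n) mod n = (n - 2 - x) mod n" by (rule mod_add_self2)
  also have "\<dots> = n - 2 - x" using lt by (rule mod_less)
  finally have "((n - 2 - x) + n) mod n = n - 2 - x" .
  then have r2: "rot n (n-1-x) (n-1) = n - 2 - x" unfolding rot_def eq .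
  have "rot n (n-1-x) ` {x, n-1} = {n-1, n-2-x}" using r1 r2 by auto
  moreover have "{0..<n} - {n-1, n-2-x} = {0..<n-1} - {n-2-x}" using assms by auto
  ultimately show ?thesis using chi_rot[of n "{x, n-1}" "n-1-x"] assms e1 by auto
qed



lemma lb_int_aux: "(k::nat) + 1 \<le> 2 * c \<Longrightarrow> odd k \<Longrightarrow> (k + 1) div 2 \<le> c" by linarith

lemma c0_full:
  assumes "n = 4 * q" "q \<ge> 1"
  shows "chi_dom {0..<n} (cycle_adj n) = 2 * q"
proof (rule antisym)
  have "chi_dom {0..<n} (cycle_adj n) \<le> 2 * (n div 4) + min (n mod 4) 2"
    by (rule chi_std_upto) (use assms in auto)
  then show "chi_dom {0..<n} (cycle_adj n) \<le> 2 * q" using assms by simp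
  have "n \<le> 2 * chi_dom {0..<n} (cycle_adj n)" by (rule chi_lb_int) (use assms in auto)
  then show "2 * q \<le> chi_dom {0..<n} (cycle_adj n)" using assms by linarith
qed

lemma c0_m1:
  assumes "n = 4 * q" "q \<ge> 1"
  shows "chi_dom {0..<n-1} (cycle_adj n) = 2 * q"
proof (rule antisym)
  have e: "n - 1 = 4 * (q - 1) + 3" using assms by auto
  have "chi_dom {0..<n-1} (cycle_adj n) \<le> 2 * ((n-1) div 4) + min ((n-1) mod 4) 2"
    by (rule chi_std_upto) (use assms in auto)
  also have "\<dots> = 2 * q" unfolding e div4 using assms(2) by simp
  finally show "chi_dom {0..<n-1} (cycle_adj n) \<le> 2 * q" .
  have "n - 1 \<le> 2 * chi_dom {0..<n-1} (cycle_adj n)" by (rule chi_lb_int) (use assms in auto)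
  then have "4 * q - 1 \<le> 2 * chi_dom {0..<n-1} (cycle_adj n)" using assms by simp
  then show "2 * q \<le> chi_dom {0..<n-1} (cycle_adj n)" using assms by linarith
qed

lemma c0_m3:
  assumes "n = 4 * q" "q \<ge> 1"
  shows "chi_dom {0..<n-3} (cycle_adj n) \<le> 2 * q - 1"
proof -
  have e: "n - 3 = 4 * (q - 1) + 1" using assms by auto
  have "chi_dom {0..<n-3} (cycle_adj n) \<le> 2 * ((n-3) div 4) + min ((n-3) mod 4) 2"
    by (rule chi_std_upto) (use assms in auto)
  also have "\<dots> = 2 * q - 1" unfolding e div4 using assms by simp
  finally show ?thesis .
qed

lemma c0_ub0:
  assumes "n = 4 * q" "q \<ge> 1" "x < n - 1" "x mod 4 \<noteq> 2"
  shows "chi_dom ({0..<n-1} - {x}) (cycle_adj n) \<le> 2 * q"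
proof (cases "x mod 4 = 1")
  case True
  have n: "n mod 4 = 0" "n \<ge> 4" using assms by auto
  have "chi_dom ({0..<n-1} - {x}) (cycle_adj n) \<le> n div 2"
    by (rule chi_ub[OF sp_dc[OF n True assms(3)] sp_img[OF n True assms(3)]])
  then show ?thesis using assms by simp
next
  case False
  then have x03: "x mod 4 = 0 \<or> x mod 4 = 3" using assms(4) by auto
  have c: "\<forall>v. v \<in> {0..<n-1} - {x} \<longrightarrow> v + 2 \<in> {0..<n-1} - {x} \<longrightarrow> v mod 4 < 2 \<longrightarrow>
            v + 1 \<in> {0..<n-1} - {x}"
  proof (intro allI impI)
    fix v assume v: "v \<in> {0..<n-1} - {x}" "v + 2 \<in> {0..<n-1} - {x}" "v mod 4 < 2"
    have "(v + 1) mod 4 = v mod 4 + 1" using v(3) by (simp add: mod_Suc)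
    then have "(v + 1) mod 4 \<noteq> x mod 4" using x03 v(3) by auto
    then have "v + 1 \<noteq> x" by auto
    then show "v + 1 \<in> {0..<n-1} - {x}" using v by auto
  qed
  have d: "dominated_coloring ({0..<n-1} - {x}) (cycle_adj n) stdc"
    by (rule std_dc[OF _ _ c]) (use assms in auto)
  have e: "n - 1 = 4 * (q - 1) + 3" using assms by auto
  have "card (stdc ` ({0..<n-1} - {x})) \<le> 2 * ((n-1) div 4) + min ((n-1) mod 4) 2"
    by (rule std_img) auto
  also have "\<dots> = 2 * q"
  proof -
    have "(n-1) div 4 = q - 1" "(n-1) mod 4 = 3" unfolding e div4 by simp_all
    then show ?thesis using assms(2) by simp
  qed
  finally have "card (stdc ` ({0..<n-1} - {x})) \<le> 2 * q" .
  then show ?thesis by (rule chi_ub[OF d])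
qed

lemma c0_ub:
  assumes "n = 4 * q" "q \<ge> 1" "x < n - 1"
  shows "chi_dom ({0..<n-1} - {x}) (cycle_adj n) \<le> 2 * q"
proof (cases "x mod 4 = 2")
  case True
  have y: "n - 2 - x < n - 1" using assms by auto
  have xk: "x = 4 * (x div 4) + 2" using div_mult_mod_eq[of x 4] True by linarith
  then have "x div 4 < q" using assms(1,3) by linarith
  then obtain j where j: "q = Suc (x div 4 + j)" using less_iff_Suc_add by blast
  have "n - 2 - x = 4 * j" using xk j assms(1) by simp
  then have "(n - 2 - x) mod 4 = 0" by simp
  then have "chi_dom ({0..<n-1} - {n-2-x}) (cycle_adj n) \<le> 2 * q"
    using c0_ub0[OF assms(1,2) y] by simp
  then show ?thesis using refl2[of n x] assms by simp
next
  case False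
  then show ?thesis using c0_ub0 assms by blast
qed

lemma c0_lb:
  assumes "n = 4 * q" "q \<ge> 1" "x < n - 1"
  shows "2 * q \<le> chi_dom ({0..<n-1} - {x}) (cycle_adj n)"
proof -
  let ?V = "{0..<n-1} - {x}"
  have V: "?V \<subseteq> {0..<n}" "?V \<subseteq> {0..<n-1}" by auto
  have n2: "n \<ge> 2" using assms by auto
  have cV: "card ?V = n - 2" using assms by simp
  have "\<exists>A. A \<subseteq> ?V \<and> odd (card A) \<and>
          (\<forall>w\<in>?V. \<forall>a\<in>A. \<forall>b\<in>?V - A. \<not> (cycle_adj n w a \<and> cycle_adj n w b))"
  proof (cases "x mod 2 = 0")
    case True
    let ?A = "{v\<in>?V. v mod 2 = 0}"
    have eA: "?A = {v. v < n - 1 \<and> v mod 2 = 0} - {x}" by auto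
    have xin: "x \<in> {v. v < n - 1 \<and> v mod 2 = 0}" using True assms(3) by blast
    have "card ?A = card {v. v < n - 1 \<and> v mod 2 = 0} - 1"
      unfolding eA by (rule card_Diff_singleton[OF xin])
    also have "\<dots> = (n - 1 + 1) div 2 - 1" by (simp only: card_even_below)
    finally have cA0: "card ?A = (n - 1 + 1) div 2 - 1" .
    have "n - 1 + 1 = 4 * q" using assms(1,2) by simp
    then have cA: "card ?A = 2 * q - 1" using cA0 by simp
    have "odd (2 * q - 1)" using assms(2) by simp
    then have "odd (card ?A)" unfolding cA .
    moreover have "\<forall>w\<in>?V. \<forall>a\<in>?A. \<forall>b\<in>?V - ?A. \<not> (cycle_adj n w a \<and> cycle_adj n w b)"
      by (rule cl_par[OF V(1)]) (rule disjI2, rule V(2))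
    moreover have "?A \<subseteq> ?V" by (rule Collect_restrict)
    ultimately show ?thesis by (intro exI[of _ ?A] conjI)
  next
    case False
    then have x13: "x mod 4 = 1 \<or> x mod 4 = 3" by presburger
    have xr: "x = x div 4 * 4 + x mod 4" by simp
    show ?thesis
    proof (cases "x mod 4 = 1")
      case True
      let ?A = "{v\<in>?V. v < x \<and> v mod 2 = 0}"
      have "?A = {v. v < x \<and> v mod 2 = 0}" using assms by auto
      then have "card ?A = (x + 1) div 2" by (simp add: card_even_below)
      also have "\<dots> = 2 * (x div 4) + 1" using xr True by linarith
      finally have "odd (card ?A)" by simp
      moreover have "\<forall>w\<in>?V. \<forall>a\<in>?A. \<forall>b\<in>?V - ?A. \<not> (cycle_adj n w a \<and> cycle_adj n w b)"
        by (rule cl_below[OF V(2)]) auto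
      moreover have "?A \<subseteq> ?V" by blast
      ultimately show ?thesis by (intro exI[of _ ?A] conjI)
    next
      case False
      then have x3: "x mod 4 = 3" using x13 by auto
      let ?A = "{v\<in>?V. v < x \<and> v mod 2 = 1}"
      have eA2: "?A = {v. v < x \<and> v mod 2 = 1}" using assms by auto
      have "card ?A = x div 2" unfolding eA2 by (rule card_odd_below)
      also have "\<dots> = 2 * (x div 4) + 1" using xr x3 by linarith
      finally have "odd (card ?A)" by simp
      moreover have "\<forall>w\<in>?V. \<forall>a\<in>?A. \<forall>b\<in>?V - ?A. \<not> (cycle_adj n w a \<and> cycle_adj n w b)"
        by (rule cl_below[OF V(2)]) auto
      moreover have "?A \<subseteq> ?V" by blast
      ultimately show ?thesis by (intro exI[of _ ?A] conjI)
    qed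
  qed
  then obtain A where A: "A \<subseteq> ?V" "odd (card A)"
    "\<forall>w\<in>?V. \<forall>a\<in>A. \<forall>b\<in>?V - A. \<not> (cycle_adj n w a \<and> cycle_adj n w b)" by blast
  have "card ?V + 1 \<le> 2 * chi_dom ?V (cycle_adj n)" by (rule chi_lb_par[OF n2 V(1) A])
  then show ?thesis using cV assms by linarith
qed



lemma c0_x:
  assumes "n = 4 * q" "q \<ge> 1" "x < n - 1"
  shows "chi_dom ({0..<n-1} - {x}) (cycle_adj n) = 2 * q"
  using c0_ub[OF assms] c0_lb[OF assms] by simp

lemma c3_full:
  assumes "n = 4 * q + 3" "q \<ge> 1"
  shows "chi_dom {0..<n} (cycle_adj n) = 2 * q + 2"
proof (rule antisym)
  have "chi_dom {0..<n} (cycle_adj n) \<le> 2 * (n div 4) + min (n mod 4) 2"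
    by (rule chi_std_upto) (use assms in auto)
  then show "chi_dom {0..<n} (cycle_adj n) \<le> 2 * q + 2" unfolding assms(1) div4 by simp
  have "n \<le> 2 * chi_dom {0..<n} (cycle_adj n)" by (rule chi_lb_int) (use assms in auto)
  then show "2 * q + 2 \<le> chi_dom {0..<n} (cycle_adj n)" using assms by linarith
qed

lemma c3_m1:
  assumes "n = 4 * q + 3" "q \<ge> 1"
  shows "chi_dom {0..<n-1} (cycle_adj n) = 2 * q + 2"
proof (rule antisym)
  have e: "n - 1 = 4 * q + 2" using assms by simp
  have "chi_dom {0..<n-1} (cycle_adj n) \<le> 2 * ((n-1) div 4) + min ((n-1) mod 4) 2"
    by (rule chi_std_upto) (use assms in auto)
  then show "chi_dom {0..<n-1} (cycle_adj n) \<le> 2 * q + 2" unfolding e div4 by simp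
  let ?V = "{0..<n-1}"
  let ?A = "{v\<in>?V. v mod 2 = 1}"
  have eA: "?A = {v. v < n - 1 \<and> v mod 2 = 1}" by auto
  have "card ?A = (n - 1) div 2" unfolding eA by (rule card_odd_below)
  then have cA: "card ?A = 2 * q + 1" unfolding e by simp
  have "card ?V + 1 \<le> 2 * chi_dom ?V (cycle_adj n)"
  proof (rule chi_lb_par)
    show "2 \<le> n" using assms by simp
    show "?V \<subseteq> {0..<n}" by auto
    show "?A \<subseteq> ?V" by (rule Collect_restrict)
    show "odd (card ?A)" unfolding cA by simp
    show "\<forall>w\<in>?V. \<forall>a\<in>?A. \<forall>b\<in>?V - ?A. \<not> (cycle_adj n w a \<and> cycle_adj n w b)"
      by (rule cl_par) auto
  qed
  then show "2 * q + 2 \<le> chi_dom ?V (cycle_adj n)" using e by simp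
qed

lemma c3_m2:
  assumes "n = 4 * q + 3" "q \<ge> 1"
  shows "chi_dom {0..<n-2} (cycle_adj n) \<le> 2 * q + 1"
proof -
  have e: "n - 2 = 4 * q + 1" using assms by simp
  have "chi_dom {0..<n-2} (cycle_adj n) \<le> 2 * ((n-2) div 4) + min ((n-2) mod 4) 2"
    by (rule chi_std_upto) (use assms in auto)
  then show ?thesis unfolding e div4 by simp
qed

lemma c1:
  assumes "n = 4 * q + 1" "q \<ge> 1"
  shows "2 * q + 1 \<le> chi_dom {0..<n} (cycle_adj n)"
    and "chi_dom {0..<n-1} (cycle_adj n) \<le> 2 * q"
proof -
  have "n \<le> 2 * chi_dom {0..<n} (cycle_adj n)" by (rule chi_lb_int) (use assms in auto)
  then show "2 * q + 1 \<le> chi_dom {0..<n} (cycle_adj n)" using assms by linarith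
  have e: "n - 1 = 4 * q + 0" using assms by simp
  have "chi_dom {0..<n-1} (cycle_adj n) \<le> 2 * ((n-1) div 4) + min ((n-1) mod 4) 2"
    by (rule chi_std_upto) (use assms in auto)
  then show "chi_dom {0..<n-1} (cycle_adj n) \<le> 2 * q" unfolding e div4 by simp
qed

lemma c2:
  assumes "n = 4 * q + 2" "q \<ge> 1"
  shows "2 * q + 2 \<le> chi_dom {0..<n} (cycle_adj n)"
    and "chi_dom {0..<n-1} (cycle_adj n) \<le> 2 * q + 1"
proof -
  let ?V = "{0..<n}"
  let ?A = "{v\<in>?V. v mod 2 = 0}"
  have eA: "?A = {v. v < n \<and> v mod 2 = 0}" by auto
  have "card ?A = (n + 1) div 2" unfolding eA by (rule card_even_below)
  then have cA: "card ?A = 2 * q + 1" unfolding assms(1) by simp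
  have "card ?V + 1 \<le> 2 * chi_dom ?V (cycle_adj n)"
  proof (rule chi_lb_par)
    show "2 \<le> n" using assms by simp
    show "?V \<subseteq> {0..<n}" by auto
    show "?A \<subseteq> ?V" by (rule Collect_restrict)
    show "odd (card ?A)" unfolding cA by simp
    show "\<forall>w\<in>?V. \<forall>a\<in>?A. \<forall>b\<in>?V - ?A. \<not> (cycle_adj n w a \<and> cycle_adj n w b)"
      by (rule cl_par) (use assms(1) in auto)
  qed
  then show "2 * q + 2 \<le> chi_dom ?V (cycle_adj n)" using assms(1) by simp
  have e: "n - 1 = 4 * q + 1" using assms by simp
  have "chi_dom {0..<n-1} (cycle_adj n) \<le> 2 * ((n-1) div 4) + min ((n-1) mod 4) 2"
    by (rule chi_std_upto) (use assms in auto)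
  then show "chi_dom {0..<n-1} (cycle_adj n) \<le> 2 * q + 1" unfolding e div4 by simp
qed

lemma St_eqI:
  assumes ex: "\<exists>S. S \<subseteq> V \<and> card S = T \<and> chi_dom (V - S) E \<noteq> chi_dom V E"
    and small: "\<And>S. S \<subseteq> V \<Longrightarrow> card S < T \<Longrightarrow> chi_dom (V - S) E = chi_dom V E"
  shows "St_dom V E = T"
  unfolding St_dom_def
proof (rule Least_equality)
  show "\<exists>S. S \<subseteq> V \<and> card S = T \<and> chi_dom (V - S) E \<noteq> chi_dom V E" by (rule ex)
  fix y assume "\<exists>S. S \<subseteq> V \<and> card S = y \<and> chi_dom (V - S) E \<noteq> chi_dom V E"
  then obtain S where S: "S \<subseteq> V" "card S = y" "chi_dom (V - S) E \<noteq> chi_dom V E" by blast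
  show "T \<le> y"
  proof (rule ccontr)
    assume "\<not> T \<le> y"
    then have "card S < T" using S by simp
    then show False using small[OF S(1)] S(3) by blast
  qed
qed

lemma card_small_cases:
  assumes "finite S"
  shows "card S = 0 \<Longrightarrow> S = {}"
    and "card S = 1 \<Longrightarrow> \<exists>x. S = {x}"
    and "card S = 2 \<Longrightarrow> \<exists>a b. a \<noteq> b \<and> S = {a, b}"
  using assms by (auto simp: card_1_singleton_iff card_2_iff)



lemma small_S:
  assumes "S \<subseteq> {0..<(n::nat)}" "card S < 3"
  shows "S = {} \<or> (\<exists>x<n. S = {x}) \<or> (\<exists>a<n. \<exists>b<n. a \<noteq> b \<and> S = {a, b})"
proof -
  have fin: "finite S" using assms(1) finite_subset by blast
  have "card S = 0 \<or> card S = 1 \<or> card S = 2" using assms(2) by auto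
  then show ?thesis
  proof (elim disjE)
    assume "card S = 0" then show ?thesis using card_small_cases(1)[OF fin] by blast
  next
    assume "card S = 1" then obtain x where "S = {x}" using card_small_cases(2)[OF fin] by blast
    then show ?thesis using assms(1) by auto
  next
    assume "card S = 2" then obtain a b where "a \<noteq> b" "S = {a, b}" using card_small_cases(3)[OF fin] by blast
    then show ?thesis using assms(1) by auto
  qed
qed

theorem mainTheorem9:
  fixes n :: nat
  assumes "n \<ge> 4"
  shows "St_dom {0..<n} (cycle_adj n) =
           (if n mod 4 = 0 then 3 else if n mod 4 = 3 then 2 else 1)"
proof -
  define q where "q = n div 4"
  have nq: "n = 4 * q + n mod 4" unfolding q_def by simp
  have q1: "q \<ge> 1" unfolding q_def using assms by simp
  have n0: "n > 0" using assms by simp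
  have r4: "n mod 4 = 0 \<or> n mod 4 = 1 \<or> n mod 4 = 2 \<or> n mod 4 = 3" by auto
  have e1: "{0..<n} - {n-1} = {0..<n-1}" using n0 by auto
  have c1s: "{n-1} \<subseteq> {0..<n}" "card {n-1} = 1" using n0 by auto
  have triv: "chi_dom ({0..<n} - S) (cycle_adj n) = chi_dom {0..<n} (cycle_adj n)"
    if "S \<subseteq> {0..<n}" "card S < 1" for S
  proof -
    have "finite S" using that(1) finite_subset by blast
    then have "S = {}" using that(2) by simp
    then show ?thesis by simp
  qed
  from r4 show ?thesis
  proof (elim disjE)
    assume r: "n mod 4 = 0"
    then have n: "n = 4 * q" using nq by simp
    have chi0: "chi_dom {0..<n} (cycle_adj n) = 2 * q" by (rule c0_full[OF n q1])
    have "St_dom {0..<n} (cycle_adj n) = 3"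
    proof (rule St_eqI)
      let ?S = "{n-3, n-2, n-1}"
      have d: "n - 3 \<notin> {n-2, n-1}" "n - 2 \<noteq> n - 1" using assms by auto
      have "?S \<subseteq> {0..<n}" using assms by auto
      moreover have "card ?S = 3" using d by simp
      moreover have "{0..<n} - ?S = {0..<n-3}" using assms by auto
      moreover have "chi_dom {0..<n-3} (cycle_adj n) \<le> 2 * q - 1" by (rule c0_m3[OF n q1])
      ultimately show "\<exists>S. S \<subseteq> {0..<n} \<and> card S = 3 \<and>
          chi_dom ({0..<n} - S) (cycle_adj n) \<noteq> chi_dom {0..<n} (cycle_adj n)"
        using chi0 q1 by (intro exI[of _ ?S]) auto
    next
      fix S assume S: "S \<subseteq> {0..<n}" "card S < 3"
      from small_S[OF S] show "chi_dom ({0..<n} - S) (cycle_adj n) = chi_dom {0..<n} (cycle_adj n)"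
      proof (elim disjE exE conjE)
        assume "S = {}" then show ?thesis by simp
      next
        fix x assume x: "x < n" "S = {x}"
        then show ?thesis using nc1[OF n0 x(1)] c0_m1[OF n q1] chi0 by simp
      next
        fix a b assume ab: "a < n" "b < n" "a \<noteq> b" "S = {a, b}"
        obtain y where y: "y < n - 1"
          "chi_dom ({0..<n} - {a,b}) (cycle_adj n) = chi_dom ({0..<n-1} - {y}) (cycle_adj n)"
          using nc2[OF n0 ab(1,2,3)] by blast
        then show ?thesis using c0_x[OF n q1 y(1)] chi0 ab(4) by simp
      qed
    qed
    then show ?thesis using r by simp
  next
    assume r: "n mod 4 = 1"
    then have n: "n = 4 * q + 1" using nq by simp
    have "St_dom {0..<n} (cycle_adj n) = 1"
    proof (rule St_eqI)
      have "chi_dom ({0..<n} - {n-1}) (cycle_adj n) \<noteq> chi_dom {0..<n} (cycle_adj n)"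
        using c1[OF n q1] e1 by simp
      then show "\<exists>S. S \<subseteq> {0..<n} \<and> card S = 1 \<and>
          chi_dom ({0..<n} - S) (cycle_adj n) \<noteq> chi_dom {0..<n} (cycle_adj n)"
        using c1s by blast
    qed (rule triv)
    then show ?thesis using r by simp
  next
    assume r: "n mod 4 = 2"
    then have n: "n = 4 * q + 2" using nq by simp
    have "St_dom {0..<n} (cycle_adj n) = 1"
    proof (rule St_eqI)
      have "chi_dom ({0..<n} - {n-1}) (cycle_adj n) \<noteq> chi_dom {0..<n} (cycle_adj n)"
        using c2[OF n q1] e1 by simp
      then show "\<exists>S. S \<subseteq> {0..<n} \<and> card S = 1 \<and>
          chi_dom ({0..<n} - S) (cycle_adj n) \<noteq> chi_dom {0..<n} (cycle_adj n)"
        using c1s by blast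
    qed (rule triv)
    then show ?thesis using r by simp
  next
    assume r: "n mod 4 = 3"
    then have n: "n = 4 * q + 3" using nq by simp
    have chi0: "chi_dom {0..<n} (cycle_adj n) = 2 * q + 2" by (rule c3_full[OF n q1])
    have "St_dom {0..<n} (cycle_adj n) = 2"
    proof (rule St_eqI)
      let ?S = "{n-2, n-1}"
      have d: "n - 2 \<noteq> n - 1" using assms by auto
      have "?S \<subseteq> {0..<n}" using assms by auto
      moreover have "card ?S = 2" using d by simp
      moreover have "{0..<n} - ?S = {0..<n-2}" using assms by auto
      moreover have "chi_dom {0..<n-2} (cycle_adj n) \<le> 2 * q + 1" by (rule c3_m2[OF n q1])
      ultimately show "\<exists>S. S \<subseteq> {0..<n} \<and> card S = 2 \<and>
          chi_dom ({0..<n} - S) (cycle_adj n) \<noteq> chi_dom {0..<n} (cycle_adj n)"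
        using chi0 by (intro exI[of _ ?S]) auto
    next
      fix S assume S: "S \<subseteq> {0..<n}" "card S < 2"
      then have "card S < 3" by simp
      from small_S[OF S(1) this] show "chi_dom ({0..<n} - S) (cycle_adj n) = chi_dom {0..<n} (cycle_adj n)"
      proof (elim disjE exE conjE)
        assume "S = {}" then show ?thesis by simp
      next
        fix x assume x: "x < n" "S = {x}"
        then show ?thesis using nc1[OF n0 x(1)] c3_m1[OF n q1] chi0 by simp
      next
        fix a b assume ab: "a < n" "b < n" "a \<noteq> b" "S = {a, b}"
        then have "card S = 2" by simp
        then show ?thesis using S(2) by simp
      qed
    qed
    then show ?thesis using r by simp
  qed
qed

end
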